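(* Let $H=\bigcup_{j=1}^n(c_j,d_j)\subset\mathbb R$ with the closed intervals $[c_j,d_j]$ pairwise disjoint, let $\mathcal B$ be a finite index set and $m\ge1$. Assume: for each $\beta\in\mathcal B$, $b_\beta,\theta_\beta\in C^m(\bar H)$, $b_\beta(x)>0$ for all $x\in\bar H$, $\theta_\beta(H)\subset H$; and there exist an integer $\mu\ge1$ and $\kappa<1$ with $|\theta_\omega(x)-\theta_\omega(y)|\le\kappa|x-y|$ for all $\omega\in\mathcal B_\mu$ and $x,y\in\bar H$. For $s>0$ let $L_s$ be $(L_sf)(x)=\sum_{\beta\in\mathcal B}[b_\beta(x)]^sf(\theta_\beta(x))$, and let $v_s$ be its strictly positive $C^m$ eigenvector with eigenvalue $r(L_s)$. Let $\epsilon_0=1$ and for $\nu\ge1$ $$\epsilon_\nu=\sup\Big\{\frac{|\theta_\omega(x)-\theta_\omega(y)|}{|x-y|}:\omega\in\mathcal B_\nu,\ x,y\in H,\ x\ne y\Big\},$$ and $C_1=\sup\{|Db_\beta(x)|/b_\beta(x):\beta\in\mathcal B,x\in H\}$. Then for $s>0$, $$\sup\Big\{\frac{|Dv_s(x)|}{v_s(x)}:x\in\bar H\Big\}\le C_1s\sum_{\nu=0}^\infty\epsilon_\nu.$$ Moreover, if $\delta\in\{0,1\}$ and $(-1)^\delta Db_\omega(x)/b_\omega(x)\le0$ for all $\omega\in\mathcal B_\nu$, all $\nu\ge1$ and all $x\in\bar H$, then $(-1)^\delta Dv_s(x)\le0$ for all $x\in\bar H$ and all $s>0$.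
   Context: $D=d/dx$. $C^m(\bar H)$ denotes real $C^m$ functions on $H$ whose derivatives of order $\le m$ extend continuously to $\bar H$. $\mathcal B_\nu=\{(j_1,\ldots,j_\nu):j_k\in\mathcal B\}$; for $\omega=(j_1,\ldots,j_\nu)$, $\theta_\omega=\theta_{j_\nu}\circ\cdots\circ\theta_{j_1}$ and $b_\omega(x)=b_{j_\nu}(\theta_{(j_1,\ldots,j_{\nu-1})}(x))\cdots b_{j_2}(\theta_{j_1}(x))\,b_{j_1}(x)$. Under these hypotheses, $L_s$ acting on $C^m(\bar H)$ has a strictly positive $C^m$ eigenvector $v_s$, unique up to positive multiples, with eigenvalue $r(L_s)>0$, and $\sum_\nu\epsilon_\nu<\infty$. *)

theory Defs
  imports "HOL-Analysis.Analysis"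
begin

text \<open>Thus the derivatives of order \<le> m on H extend continuously to closure H.\<close>
definition Cm_closure :: "nat \<Rightarrow> real set \<Rightarrow> (real \<Rightarrow> real) \<Rightarrow> bool" where
  "Cm_closure m H f \<longleftrightarrow>
     (\<exists>g :: nat \<Rightarrow> real \<Rightarrow> real.
        (\<forall>x\<in>closure H. g 0 x = f x) \<and>
        (\<forall>k\<le>m. continuous_on (closure H) (g k)) \<and>
        (\<forall>k<m. \<forall>x\<in>H. (g k has_real_derivative g (Suc k) x) (at x)))"

text \<open>Derivative D f at a point x of a set S (relative to S); on closure H this is the
  continuous extension of the derivative to the endpoints (one-sided derivative there).\<close>
definition Dwithin :: "real set \<Rightarrow> (real \<Rightarrow> real) \<Rightarrow> real \<Rightarrow> real" where
  "Dwithin S f x = (THE D. (f has_real_derivative D) (at x within S))"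

text \<open>Words omega = (j_1,...,j_nu) are lists [j_1,...,j_nu];
  theta_omega = theta_{j_nu} o ... o theta_{j_1}.\<close>
fun theta_word :: "('b \<Rightarrow> real \<Rightarrow> real) \<Rightarrow> 'b list \<Rightarrow> real \<Rightarrow> real" where
  "theta_word \<theta> [] x = x"
| "theta_word \<theta> (j # \<omega>) x = theta_word \<theta> \<omega> (\<theta> j x)"

fun b_word :: "('b \<Rightarrow> real \<Rightarrow> real) \<Rightarrow> ('b \<Rightarrow> real \<Rightarrow> real) \<Rightarrow> 'b list \<Rightarrow> real \<Rightarrow> real" where
  "b_word b \<theta> [] x = 1"
| "b_word b \<theta> (j # \<omega>) x = b j x * b_word b \<theta> \<omega> (\<theta> j x)"

definition words :: "'b set \<Rightarrow> nat \<Rightarrow> 'b list set" where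
  "words B \<nu> = {\<omega>. length \<omega> = \<nu> \<and> set \<omega> \<subseteq> B}"

end

theory Submission
  imports Defs
begin

lemma Dwithin_within:
  assumes "at x within S \<noteq> bot" "(f has_real_derivative D) (at x within S)"
  shows "Dwithin S f x = D"
  unfolding Dwithin_def
proof (rule the_equality)
  show "(f has_real_derivative D) (at x within S)" by fact
  fix E assume "(f has_real_derivative E) (at x within S)"
  then show "E = D" using assms vector_derivative_unique_within
    by (metis has_real_derivative_iff_has_vector_derivative)
qed

lemma Dwithin_at:
  assumes "x \<in> interior S" "(f has_real_derivative D) (at x)"
  shows "Dwithin S f x = D"
  using assms Dwithin_within at_within_interior[OF assms(1)] by (metis trivial_limit_at)

lemma deriv_Icc:
  fixes f g :: "real \<Rightarrow> real"
  assumes ab: "a < b" and cf: "continuous_on {a..b} f" and cg: "continuous_on {a..b} g"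
    and der: "\<forall>x\<in>{a<..<b}. (f has_real_derivative g x) (at x)" and x: "x \<in> {a..b}"
  shows "(f has_real_derivative g x) (at x within {a..b})"
proof -
  have I: "((\<lambda>u. integral {a..u} g) has_vector_derivative g x) (at x within {a..b})"
    using integral_has_vector_derivative[OF cg x] .
  have eq: "f y = f a + integral {a..y} g" if y: "y \<in> {a..b}" for y
  proof -
    have "(g has_integral f y - f a) {a..y}"
    proof (rule fundamental_theorem_of_calculus_interior)
      show "a \<le> y" using y by auto
      show "continuous_on {a..y} f" by (rule continuous_on_subset[OF cf]) (use y in auto)
      show "(f has_vector_derivative g z) (at z)" if "z \<in> {a<..<y}" for z
      proof -
        have "z \<in> {a<..<b}" using that y by auto
        then show ?thesis using der by (simp add: has_real_derivative_iff_has_vector_derivative[symmetric])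
      qed
    qed
    from integral_unique[OF this] show ?thesis by simp
  qed
  have "((\<lambda>u. f a + integral {a..u} g) has_vector_derivative 0 + g x) (at x within {a..b})"
    by (rule has_vector_derivative_add[OF has_vector_derivative_const I])
  then have D: "((\<lambda>u. f a + integral {a..u} g) has_real_derivative g x) (at x within {a..b})"
    by (simp add: has_real_derivative_iff_has_vector_derivative)
  show ?thesis
    by (rule has_field_derivative_transform_within[OF D, where d=1]) (use x eq[symmetric] in auto)
qed

lemma deriv_bound_dq:
  fixes f :: "real \<Rightarrow> real"
  assumes "open H" "x \<in> H" "(f has_real_derivative D) (at x)"
    and "\<And>y. y \<in> H \<Longrightarrow> y \<noteq> x \<Longrightarrow> \<bar>f y - f x\<bar> / \<bar>y - x\<bar> \<le> E"
  shows "\<bar>D\<bar> \<le> E"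
proof -
  have "((\<lambda>y. (f y - f x) / (y - x)) \<longlongrightarrow> D) (at x)"
    using assms(3) has_field_derivative_iff by blast
  then have "((\<lambda>y. \<bar>(f y - f x) / (y - x)\<bar>) \<longlongrightarrow> \<bar>D\<bar>) (at x)" by (rule tendsto_rabs)
  moreover have "\<forall>\<^sub>F y in at x. \<bar>(f y - f x) / (y - x)\<bar> \<le> E"
    using eventually_at_in_open[OF assms(1,2)]
    by eventually_elim (use assms(4) in \<open>auto simp: abs_divide\<close>)
  ultimately show ?thesis by (rule tendsto_upperbound) simp
qed

lemma compact_bound:
  fixes f :: "real \<Rightarrow> real"
  assumes "compact S" "continuous_on S f"
  shows "\<exists>K. \<forall>x\<in>S. \<bar>f x\<bar> \<le> K"
proof -
  have "bounded (f ` S)" using compact_imp_bounded[OF compact_continuous_image[OF assms(2,1)]] .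
  then show ?thesis unfolding bounded_pos by (auto simp: real_norm_def)
qed

lemma finite_uniform_bound:
  fixes f :: "'b \<Rightarrow> 'a \<Rightarrow> real"
  assumes "finite B" "\<forall>\<beta>\<in>B. \<exists>K. \<forall>y\<in>S \<beta>. f \<beta> y \<le> K"
  shows "\<exists>K. \<forall>\<beta>\<in>B. \<forall>y\<in>S \<beta>. f \<beta> y \<le> K"
  using assms
proof (induction B rule: finite_induct)
  case empty then show ?case by auto
next
  case (insert a F)
  then obtain K1 where K1: "\<forall>\<beta>\<in>F. \<forall>y\<in>S \<beta>. f \<beta> y \<le> K1" by auto
  obtain K2 where K2: "\<forall>y\<in>S a. f a y \<le> K2" using insert by auto
  show ?case by (rule exI[of _ "max K1 K2"]) (use K1 K2 in \<open>metis insert_iff max.coboundedI1 max.coboundedI2\<close>)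
qed

lemma finite_pos_min:
  assumes "finite P" "\<forall>p\<in>P. \<exists>\<delta>>0. \<forall>e. 0 < e \<and> e \<le> \<delta> \<longrightarrow> Q p e"
  shows "\<exists>\<delta>>(0::real). \<forall>p\<in>P. \<forall>e. 0 < e \<and> e \<le> \<delta> \<longrightarrow> Q p e"
  using assms
proof (induction P rule: finite_induct)
  case empty show ?case using zero_less_one by blast
next
  case (insert a F)
  then obtain d1 where d1: "d1 > 0" "\<forall>p\<in>F. \<forall>e. 0 < e \<and> e \<le> d1 \<longrightarrow> Q p e" by auto
  obtain d2 where d2: "d2 > 0" "\<forall>e. 0 < e \<and> e \<le> d2 \<longrightarrow> Q a e" using insert by auto
  show ?case by (rule exI[of _ "min d1 d2"]) (use d1 d2 in auto)
qed

locale Hset =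
  fixes n :: nat and c d :: "nat \<Rightarrow> real" and H :: "real set"
  assumes H_def: "H = (\<Union>j\<in>{1..n}. {c j<..<d j})"
    and cd: "\<forall>j\<in>{1..n}. c j < d j"
    and disj: "\<forall>j\<in>{1..n}. \<forall>k\<in>{1..n}. j \<noteq> k \<longrightarrow> {c j..d j} \<inter> {c k..d k} = {}"
begin

lemma open_H: "open H" unfolding H_def by auto

lemma closure_H: "closure H = (\<Union>j\<in>{1..n}. {c j..d j})"
proof
  have "closed (\<Union>j\<in>{1..n}. {c j..d j})" by (intro closed_UN) auto
  moreover have "H \<subseteq> (\<Union>j\<in>{1..n}. {c j..d j})" unfolding H_def by auto
  ultimately show "closure H \<subseteq> (\<Union>j\<in>{1..n}. {c j..d j})" by (rule closure_minimal[rotated])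
  show "(\<Union>j\<in>{1..n}. {c j..d j}) \<subseteq> closure H"
  proof (rule UN_least)
    fix j assume j: "j \<in> {1..n}"
    have "{c j..d j} = closure {c j<..<d j}" using cd j by simp
    also have "\<dots> \<subseteq> closure H" unfolding H_def by (rule closure_mono) (use j in auto)
    finally show "{c j..d j} \<subseteq> closure H" .
  qed
qed

lemma compact_cH: "compact (closure H)"
  unfolding closure_H by (intro compact_UN) auto

lemma gap: "\<exists>\<delta>>0. \<forall>j\<in>{1..n}. \<forall>k\<in>{1..n}. \<forall>x\<in>{c j..d j}. \<forall>y\<in>{c k..d k}. \<bar>x - y\<bar> < \<delta> \<longrightarrow> j = k"
proof -
  let ?P = "{(j,k). j \<in> {1..n} \<and> k \<in> {1..n} \<and> j \<noteq> k}"
  have fin: "finite ?P" by (rule finite_subset[of _ "{1..n} \<times> {1..n}"]) auto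
  have "\<forall>p\<in>?P. \<exists>\<delta>>0. \<forall>e. 0 < e \<and> e \<le> \<delta> \<longrightarrow>
      (\<forall>x\<in>{c (fst p)..d (fst p)}. \<forall>y\<in>{c (snd p)..d (snd p)}. \<not> \<bar>x - y\<bar> < e)"
  proof
    fix p assume p: "p \<in> ?P"
    obtain j k where jk: "p = (j,k)" "j \<in> {1..n}" "k \<in> {1..n}" "j \<noteq> k" using p by auto
    obtain \<delta> where "\<delta> > 0" "\<forall>x\<in>{c j..d j}. \<forall>y\<in>{c k..d k}. \<delta> \<le> dist x y"
      using separate_compact_closed[of "{c j..d j}" "{c k..d k}"] disj jk by auto
    then show "\<exists>\<delta>>0. \<forall>e. 0 < e \<and> e \<le> \<delta> \<longrightarrow>
      (\<forall>x\<in>{c (fst p)..d (fst p)}. \<forall>y\<in>{c (snd p)..d (snd p)}. \<not> \<bar>x - y\<bar> < e)"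
      using jk by (intro exI[of _ \<delta>]) (force simp: dist_real_def)
  qed
  from finite_pos_min[OF fin this] obtain \<delta> where \<delta>: "\<delta> > 0"
    "\<forall>p\<in>?P. \<forall>e. 0 < e \<and> e \<le> \<delta> \<longrightarrow>
      (\<forall>x\<in>{c (fst p)..d (fst p)}. \<forall>y\<in>{c (snd p)..d (snd p)}. \<not> \<bar>x - y\<bar> < e)" by blast
  show ?thesis
  proof (rule exI[of _ \<delta>], intro conjI ballI impI)
    show "\<delta> > 0" by fact
    fix j k x y assume "j \<in> {1..n}" "k \<in> {1..n}" "x \<in> {c j..d j}" "y \<in> {c k..d k}" "\<bar>x - y\<bar> < \<delta>"
    then show "j = k" using \<delta>(2) \<delta>(1) by (metis (mono_tags, lifting) case_prodI fst_conv mem_Collect_eq order_refl snd_conv)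
  qed
qed

lemma H_in_open: "j \<in> {1..n} \<Longrightarrow> x \<in> H \<Longrightarrow> x \<in> {c j..d j} \<Longrightarrow> x \<in> {c j<..<d j}"
proof -
  assume j: "j \<in> {1..n}" and "x \<in> H" and xj: "x \<in> {c j..d j}"
  then obtain k where k: "k \<in> {1..n}" "x \<in> {c k<..<d k}" unfolding H_def by auto
  have "j = k" using disj j k xj by (metis (no_types, lifting) IntI emptyE greaterThanLessThan_subseteq_atLeastAtMost_iff order_refl subsetD)
  then show ?thesis using k by simp
qed

lemma local_at:
  assumes x: "x \<in> closure H"
  shows "\<exists>j\<in>{1..n}. x \<in> {c j..d j} \<and> at x within closure H = at x within {c j..d j}"
proof -
  obtain j where j: "j \<in> {1..n}" "x \<in> {c j..d j}" using x closure_H by auto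
  obtain \<delta> where \<delta>: "\<delta> > 0" "\<forall>j\<in>{1..n}. \<forall>k\<in>{1..n}. \<forall>x\<in>{c j..d j}. \<forall>y\<in>{c k..d k}. \<bar>x - y\<bar> < \<delta> \<longrightarrow> j = k"
    using gap by blast
  have "at x within closure H = at x within {c j..d j}"
  proof (rule at_within_nhd[of _ "ball x \<delta>"])
    show "x \<in> ball x \<delta>" using \<delta> by simp
    show "open (ball x \<delta>)" by simp
    show "closure H \<inter> ball x \<delta> - {x} = {c j..d j} \<inter> ball x \<delta> - {x}"
    proof
      show "closure H \<inter> ball x \<delta> - {x} \<subseteq> {c j..d j} \<inter> ball x \<delta> - {x}"
      proof
        fix y assume y: "y \<in> closure H \<inter> ball x \<delta> - {x}"
        then obtain k where k: "k \<in> {1..n}" "y \<in> {c k..d k}" using closure_H by auto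
        have "\<bar>x - y\<bar> < \<delta>" using y by (auto simp: dist_real_def)
        then have "j = k" using \<delta>(2) j k by blast
        then show "y \<in> {c j..d j} \<inter> ball x \<delta> - {x}" using y k by auto
      qed
      show "{c j..d j} \<inter> ball x \<delta> - {x} \<subseteq> closure H \<inter> ball x \<delta> - {x}"
        using closure_H j by auto
    qed
  qed
  then show ?thesis using j by blast
qed

lemma Dwithin_closure:
  assumes cf: "continuous_on (closure H) f" and cg: "continuous_on (closure H) g"
    and der: "\<forall>x\<in>H. (f has_real_derivative g x) (at x)" and x: "x \<in> closure H"
  shows "Dwithin (closure H) f x = g x"
proof -
  obtain j where j: "j \<in> {1..n}" "x \<in> {c j..d j}" and eq: "at x within closure H = at x within {c j..d j}"
    using local_at[OF x] by blast
  have sub: "{c j..d j} \<subseteq> closure H" using closure_H j by auto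
  have cj: "c j < d j" using cd j by auto
  have "(f has_real_derivative g x) (at x within {c j..d j})"
  proof (rule deriv_Icc[OF cj])
    show "continuous_on {c j..d j} f" by (rule continuous_on_subset[OF cf sub])
    show "continuous_on {c j..d j} g" by (rule continuous_on_subset[OF cg sub])
    show "\<forall>x\<in>{c j<..<d j}. (f has_real_derivative g x) (at x)" using der j unfolding H_def by auto
    show "x \<in> {c j..d j}" by fact
  qed
  moreover have "at x within {c j..d j} \<noteq> bot"
    using trivial_limit_within islimpt_Icc[OF cj] j by auto
  ultimately show ?thesis using Dwithin_within eq by metis
qed

lemma lipschitz_H:
  assumes cf: "continuous_on (closure H) f" and cg: "continuous_on (closure H) g"
    and der: "\<forall>x\<in>H. (f has_real_derivative g x) (at x)"
  shows "\<exists>K\<ge>0. \<forall>x\<in>H. \<forall>y\<in>H. \<bar>f x - f y\<bar> \<le> K * \<bar>x - y\<bar>"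
proof -
  obtain T where T: "\<forall>x\<in>closure H. \<bar>f x\<bar> \<le> T" using compact_bound[OF compact_cH cf] by blast
  obtain D where D: "\<forall>x\<in>closure H. \<bar>g x\<bar> \<le> D" using compact_bound[OF compact_cH cg] by blast
  obtain \<delta> where \<delta>: "\<delta> > 0" "\<forall>j\<in>{1..n}. \<forall>k\<in>{1..n}. \<forall>x\<in>{c j..d j}. \<forall>y\<in>{c k..d k}. \<bar>x - y\<bar> < \<delta> \<longrightarrow> j = k"
    using gap by blast
  define K where "K = \<bar>D\<bar> + 2 * \<bar>T\<bar> / \<delta>"
  have K0: "K \<ge> 0" unfolding K_def using \<delta> by auto
  have main: "\<bar>f x - f y\<bar> \<le> K * \<bar>x - y\<bar>" if x: "x \<in> H" and y: "y \<in> H" and xy: "x < y" for x y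
  proof (cases "\<bar>x - y\<bar> < \<delta>")
    case True
    obtain j where j: "j \<in> {1..n}" "x \<in> {c j<..<d j}" using x unfolding H_def by auto
    obtain k where k: "k \<in> {1..n}" "y \<in> {c k<..<d k}" using y unfolding H_def by auto
    have "j = k" using \<delta>(2) j k True by (meson greaterThanLessThan_subseteq_atLeastAtMost_iff order_refl subsetD)
    then have seg: "\<And>z. x \<le> z \<Longrightarrow> z \<le> y \<Longrightarrow> z \<in> H" using j k unfolding H_def by (intro UN_I[of k]) auto
    obtain z where z: "x < z" "z < y" "f y - f x = (y - x) * g z"
      using MVT2[OF xy, of f g] der seg by blast
    have "z \<in> closure H" using seg[of z] z closure_subset by auto
    then have "\<bar>g z\<bar> \<le> D" using D by auto
    then have "\<bar>f y - f x\<bar> \<le> \<bar>D\<bar> * \<bar>x - y\<bar>" using z xy by (auto simp: abs_mult intro!: mult_right_mono)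
    also have "\<dots> \<le> K * \<bar>x - y\<bar>" unfolding K_def using \<delta> by (intro mult_right_mono) auto
    finally show ?thesis by (simp add: abs_minus_commute)
  next
    case False
    have "\<bar>f x - f y\<bar> \<le> 2 * \<bar>T\<bar>" using T x y closure_subset by (smt (verit, best) subsetD)
    also have "\<dots> = (2 * \<bar>T\<bar> / \<delta>) * \<delta>" using \<delta> by simp
    also have "\<dots> \<le> (2 * \<bar>T\<bar> / \<delta>) * \<bar>x - y\<bar>" using False \<delta> by (intro mult_left_mono) auto
    also have "\<dots> \<le> K * \<bar>x - y\<bar>" unfolding K_def by (intro mult_right_mono) auto
    finally show ?thesis .
  qed
  show ?thesis
  proof (intro exI[of _ K] conjI K0 ballI)
    fix x y assume "x \<in> H" "y \<in> H"
    then show "\<bar>f x - f y\<bar> \<le> K * \<bar>x - y\<bar>"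
      using main[of x y] main[of y x] by (cases x y rule: linorder_cases) (auto simp: abs_minus_commute)
  qed
qed

end

fun thD :: "('b \<Rightarrow> real \<Rightarrow> real) \<Rightarrow> ('b \<Rightarrow> real \<Rightarrow> real) \<Rightarrow> 'b list \<Rightarrow> real \<Rightarrow> real" where
  "thD th tD [] x = 1"
| "thD th tD (j # w) x = thD th tD w (th j x) * tD j x"

fun LD :: "('b \<Rightarrow> real \<Rightarrow> real) \<Rightarrow> ('b \<Rightarrow> real \<Rightarrow> real) \<Rightarrow> ('b \<Rightarrow> real \<Rightarrow> real) \<Rightarrow> 'b list \<Rightarrow> real \<Rightarrow> real" where
  "LD th tD bL [] x = 0"
| "LD th tD bL (j # w) x = bL j x + LD th tD bL w (th j x) * tD j x"

lemma theta_word_append: "theta_word \<theta> (u @ w) x = theta_word \<theta> w (theta_word \<theta> u x)"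
  by (induction u arbitrary: x) auto

lemma theta_word_snoc: "theta_word \<theta> (u @ [j]) x = \<theta> j (theta_word \<theta> u x)"
  by (simp add: theta_word_append)

lemma thD_snoc: "thD \<theta> tD (u @ [j]) x = tD j (theta_word \<theta> u x) * thD \<theta> tD u x"
  by (induction u arbitrary: x) auto

lemma theta_word_in:
  assumes "\<forall>\<beta>\<in>B. \<theta> \<beta> ` H \<subseteq> H"
  shows "set w \<subseteq> B \<Longrightarrow> x \<in> H \<Longrightarrow> theta_word \<theta> w x \<in> H"
  using assms by (induction w arbitrary: x) auto

lemma b_word_pos:
  assumes "\<forall>\<beta>\<in>B. \<theta> \<beta> ` H \<subseteq> H" "\<forall>\<beta>\<in>B. \<forall>x\<in>H. b \<beta> x > 0"
  shows "set w \<subseteq> B \<Longrightarrow> x \<in> H \<Longrightarrow> b_word b \<theta> w x > 0"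
  using assms by (induction w arbitrary: x) (auto intro!: mult_pos_pos simp: image_subset_iff)

lemma words_Suc: "words B (Suc N) = (\<lambda>(j,w). j # w) ` (B \<times> words B N)"
proof
  show "words B (Suc N) \<subseteq> (\<lambda>(j,w). j # w) ` (B \<times> words B N)"
  proof
    fix w assume "w \<in> words B (Suc N)"
    then obtain j u where "w = j # u" "j \<in> B" "u \<in> words B N"
      unfolding words_def by (cases w) auto
    then show "w \<in> (\<lambda>(j,w). j # w) ` (B \<times> words B N)" by force
  qed
  show "(\<lambda>(j,w). j # w) ` (B \<times> words B N) \<subseteq> words B (Suc N)"
    unfolding words_def by auto
qed

lemma finite_words: "finite B \<Longrightarrow> finite (words B N)"
  unfolding words_def using finite_lists_length_eq[of B N] by (simp add: conj_commute)

lemma words_nonempty: "B \<noteq> {} \<Longrightarrow> words B N \<noteq> {}"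
proof -
  assume "B \<noteq> {}"
  then obtain j where "j \<in> B" by auto
  then have "replicate N j \<in> words B N" unfolding words_def by auto
  then show ?thesis by auto
qed

lemma theta_deriv:
  assumes "\<forall>\<beta>\<in>B. \<theta> \<beta> ` H \<subseteq> H" "\<forall>\<beta>\<in>B. \<forall>x\<in>H. (\<theta> \<beta> has_real_derivative tD \<beta> x) (at x)"
  shows "set w \<subseteq> B \<Longrightarrow> x \<in> H \<Longrightarrow> (theta_word \<theta> w has_real_derivative thD \<theta> tD w x) (at x)"
proof (induction w arbitrary: x)
  case Nil
  then show ?case by (simp add: DERIV_ident[unfolded id_def] del: theta_word.simps)
    (metis DERIV_ident theta_word.simps(1) ext)
next
  case (Cons j w)
  have j: "j \<in> B" using Cons by auto
  have "\<theta> j x \<in> H" using assms(1) j Cons by auto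
  then have "(theta_word \<theta> w has_real_derivative thD \<theta> tD w (\<theta> j x)) (at (\<theta> j x))" using Cons by auto
  from DERIV_chain2[where f="theta_word \<theta> w" and g="\<theta> j", OF this] assms(2) j Cons(3)
  have "((\<lambda>x. theta_word \<theta> w (\<theta> j x)) has_real_derivative thD \<theta> tD w (\<theta> j x) * tD j x) (at x)" by blast
  then show ?case by simp
qed

lemma b_deriv:
  assumes "\<forall>\<beta>\<in>B. \<theta> \<beta> ` H \<subseteq> H" "\<forall>\<beta>\<in>B. \<forall>x\<in>H. (\<theta> \<beta> has_real_derivative tD \<beta> x) (at x)"
    "\<forall>\<beta>\<in>B. \<forall>x\<in>H. (b \<beta> has_real_derivative bD \<beta> x) (at x)"
    "\<forall>\<beta>\<in>B. \<forall>x\<in>H. b \<beta> x > 0"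
  shows "set w \<subseteq> B \<Longrightarrow> x \<in> H \<Longrightarrow> (b_word b \<theta> w has_real_derivative
    b_word b \<theta> w x * LD \<theta> tD (\<lambda>j y. bD j y / b j y) w x) (at x)"
proof (induction w arbitrary: x)
  case Nil
  then show ?case by simp
next
  case (Cons j w)
  have j: "j \<in> B" using Cons by auto
  have y: "\<theta> j x \<in> H" using assms(1) j Cons by auto
  then have IH: "(b_word b \<theta> w has_real_derivative
    b_word b \<theta> w (\<theta> j x) * LD \<theta> tD (\<lambda>j y. bD j y / b j y) w (\<theta> j x)) (at (\<theta> j x))" using Cons by auto
  from DERIV_chain2[where f="b_word b \<theta> w" and g="\<theta> j", OF IH] assms(2) j Cons(3)
  have D1: "((\<lambda>x. b_word b \<theta> w (\<theta> j x)) has_real_derivative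
     b_word b \<theta> w (\<theta> j x) * LD \<theta> tD (\<lambda>j y. bD j y / b j y) w (\<theta> j x) * tD j x) (at x)" by blast
  have D2: "(b j has_real_derivative bD j x) (at x)" using assms(3) j Cons(3) by auto
  have bpos: "b j x > 0" using assms(4) j Cons(3) by auto
  have "((\<lambda>x. b j x * b_word b \<theta> w (\<theta> j x)) has_real_derivative
     bD j x * b_word b \<theta> w (\<theta> j x) + b j x * (b_word b \<theta> w (\<theta> j x) * LD \<theta> tD (\<lambda>j y. bD j y / b j y) w (\<theta> j x) * tD j x)) (at x)"
    by (rule DERIV_cong[OF DERIV_mult[OF D2 D1]]) (simp add: algebra_simps)
  moreover have "bD j x * b_word b \<theta> w (\<theta> j x) + b j x * (b_word b \<theta> w (\<theta> j x) * LD \<theta> tD (\<lambda>j y. bD j y / b j y) w (\<theta> j x) * tD j x)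
     = b j x * b_word b \<theta> w (\<theta> j x) * LD \<theta> tD (\<lambda>j y. bD j y / b j y) (j # w) x"
    using bpos by (simp add: field_simps)
  ultimately show ?case by simp
qed

lemma eigen_iter:
  fixes v :: "real \<Rightarrow> real"
  assumes fin: "finite B" and maps: "\<forall>\<beta>\<in>B. \<theta> \<beta> ` H \<subseteq> H" and bpos: "\<forall>\<beta>\<in>B. \<forall>x\<in>H. b \<beta> x > 0"
    and eig: "\<forall>x\<in>H. (\<Sum>\<beta>\<in>B. b \<beta> x powr s * v (\<theta> \<beta> x)) = r * v x"
  shows "x \<in> H \<Longrightarrow> (\<Sum>w\<in>words B N. b_word b \<theta> w x powr s * v (theta_word \<theta> w x)) = r ^ N * v x"
proof (induction N arbitrary: x)
  case 0
  have "words B 0 = {[]}" unfolding words_def by auto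
  then show ?case by simp
next
  case (Suc N)
  have inj: "inj_on (\<lambda>(j,w). j # w) (B \<times> words B N)" by (auto simp: inj_on_def)
  have "(\<Sum>w\<in>words B (Suc N). b_word b \<theta> w x powr s * v (theta_word \<theta> w x))
      = (\<Sum>(j,w)\<in>B \<times> words B N. b_word b \<theta> (j # w) x powr s * v (theta_word \<theta> (j # w) x))"
    unfolding words_Suc by (subst sum.reindex[OF inj]) (simp add: case_prod_unfold)
  also have "\<dots> = (\<Sum>j\<in>B. \<Sum>w\<in>words B N. b_word b \<theta> (j # w) x powr s * v (theta_word \<theta> (j # w) x))"
    by (rule sum.cartesian_product[symmetric])
  also have "\<dots> = (\<Sum>j\<in>B. \<Sum>w\<in>words B N. b j x powr s * (b_word b \<theta> w (\<theta> j x) powr s * v (theta_word \<theta> w (\<theta> j x))))"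
  proof -
    have "\<And>j w. j \<in> B \<Longrightarrow> w \<in> words B N \<Longrightarrow> b_word b \<theta> (j # w) x powr s * v (theta_word \<theta> (j # w) x)
       = b j x powr s * (b_word b \<theta> w (\<theta> j x) powr s * v (theta_word \<theta> w (\<theta> j x)))"
    proof -
      fix j w assume j: "j \<in> B" and w: "w \<in> words B N"
      have "b j x > 0" using bpos j Suc by auto
      moreover have "\<theta> j x \<in> H" using maps j Suc(2) by auto
      then have "b_word b \<theta> w (\<theta> j x) > 0"
        using b_word_pos[OF maps bpos] w unfolding words_def by auto
      ultimately show "b_word b \<theta> (j # w) x powr s * v (theta_word \<theta> (j # w) x)
       = b j x powr s * (b_word b \<theta> w (\<theta> j x) powr s * v (theta_word \<theta> w (\<theta> j x)))"
        by (simp add: powr_mult)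
    qed
    then show ?thesis by (intro sum.cong refl) blast
  qed
  also have "\<dots> = (\<Sum>j\<in>B. b j x powr s * (r ^ N * v (\<theta> j x)))"
  proof (intro sum.cong refl)
    fix j assume j: "j \<in> B"
    have "\<theta> j x \<in> H" using maps j Suc(2) by auto
    then show "(\<Sum>w\<in>words B N. b j x powr s * (b_word b \<theta> w (\<theta> j x) powr s * v (theta_word \<theta> w (\<theta> j x))))
       = b j x powr s * (r ^ N * v (\<theta> j x))"
      using Suc.IH by (simp add: sum_distrib_left[symmetric])
  qed
  also have "\<dots> = r ^ N * (\<Sum>j\<in>B. b j x powr s * v (\<theta> j x))"
    by (simp add: sum_distrib_left mult_ac)
  also have "\<dots> = r ^ Suc N * v x" using eig Suc by simp
  finally show ?case .
qed

lemma LD_bound: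
  fixes \<epsilon> :: "nat \<Rightarrow> real"
  assumes maps: "\<forall>\<beta>\<in>B. \<theta> \<beta> ` H \<subseteq> H"
    and bLb: "\<forall>j\<in>B. \<forall>y\<in>H. \<bar>bL j y\<bar> \<le> C"
    and thb: "\<forall>\<pi> x. set \<pi> \<subseteq> B \<longrightarrow> x \<in> H \<longrightarrow> \<bar>thD \<theta> tD \<pi> x\<bar> \<le> \<epsilon> (length \<pi>)"
  shows "set w \<subseteq> B \<Longrightarrow> set \<pi> \<subseteq> B \<Longrightarrow> x \<in> H \<Longrightarrow>
    \<bar>LD \<theta> tD bL w (theta_word \<theta> \<pi> x) * thD \<theta> tD \<pi> x\<bar> \<le> C * (\<Sum>k<length w. \<epsilon> (length \<pi> + k))"
proof (induction w arbitrary: \<pi>)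
  case Nil
  then show ?case by simp
next
  case (Cons j w)
  let ?y = "theta_word \<theta> \<pi> x" and ?t = "thD \<theta> tD \<pi> x"
  have j: "j \<in> B" and w: "set w \<subseteq> B" using Cons by auto
  have y: "?y \<in> H" using theta_word_in[OF maps] Cons by auto
  have eq: "LD \<theta> tD bL (j # w) ?y * ?t
      = bL j ?y * ?t + LD \<theta> tD bL w (theta_word \<theta> (\<pi> @ [j]) x) * thD \<theta> tD (\<pi> @ [j]) x"
    by (simp add: theta_word_snoc thD_snoc algebra_simps)
  have C0: "0 \<le> C" using bLb j y by (meson abs_ge_zero order_trans)
  have 1: "\<bar>bL j ?y * ?t\<bar> \<le> C * \<epsilon> (length \<pi>)"
    unfolding abs_mult by (rule mult_mono) (use bLb j y thb Cons C0 in auto)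
  have 2: "\<bar>LD \<theta> tD bL w (theta_word \<theta> (\<pi> @ [j]) x) * thD \<theta> tD (\<pi> @ [j]) x\<bar>
      \<le> C * (\<Sum>k<length w. \<epsilon> (length (\<pi> @ [j]) + k))"
    using Cons.IH[of "\<pi> @ [j]"] w j Cons.prems by auto
  have "\<bar>LD \<theta> tD bL (j # w) ?y * ?t\<bar> \<le> C * \<epsilon> (length \<pi>) + C * (\<Sum>k<length w. \<epsilon> (length (\<pi> @ [j]) + k))"
    unfolding eq using 1 2 by linarith
  also have "\<dots> = C * (\<Sum>k<length (j # w). \<epsilon> (length \<pi> + k))"
    by (simp only: length_Cons sum.lessThan_Suc_shift) (simp add: algebra_simps)
  finally show ?case .
qed

lemma theta_word_lip:
  assumes maps: "\<forall>\<beta>\<in>B. \<theta> \<beta> ` H \<subseteq> H"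
    and lip: "\<forall>\<beta>\<in>B. \<forall>x\<in>H. \<forall>y\<in>H. \<bar>\<theta> \<beta> x - \<theta> \<beta> y\<bar> \<le> K * \<bar>x - y\<bar>" and K: "K \<ge> 0"
  shows "set w \<subseteq> B \<Longrightarrow> x \<in> H \<Longrightarrow> y \<in> H \<Longrightarrow>
    \<bar>theta_word \<theta> w x - theta_word \<theta> w y\<bar> \<le> K ^ length w * \<bar>x - y\<bar>"
proof (induction w arbitrary: x y)
  case Nil then show ?case by simp
next
  case (Cons j w)
  have j: "j \<in> B" using Cons by auto
  have xy: "\<theta> j x \<in> H" "\<theta> j y \<in> H" using maps j Cons by auto
  have "\<bar>theta_word \<theta> (j # w) x - theta_word \<theta> (j # w) y\<bar> \<le> K ^ length w * \<bar>\<theta> j x - \<theta> j y\<bar>"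
    using Cons xy by simp
  also have "\<dots> \<le> K ^ length w * (K * \<bar>x - y\<bar>)"
    by (rule mult_left_mono) (use lip j Cons K in auto)
  finally show ?case by (simp add: mult_ac)
qed

definition Qset :: "('b \<Rightarrow> real \<Rightarrow> real) \<Rightarrow> 'b set \<Rightarrow> real set \<Rightarrow> nat \<Rightarrow> real set" where
  "Qset \<theta> B H \<nu> = {\<bar>theta_word \<theta> \<omega> x - theta_word \<theta> \<omega> y\<bar> / \<bar>x - y\<bar> |
                   \<omega> x y. \<omega> \<in> words B \<nu> \<and> x \<in> H \<and> y \<in> H \<and> x \<noteq> y}"

locale Eps =
  fixes B :: "'b set" and \<theta> :: "'b \<Rightarrow> real \<Rightarrow> real" and H :: "real set" and \<epsilon> :: "nat \<Rightarrow> real"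
    and \<mu> :: nat and \<kappa> K :: real
  assumes maps: "\<forall>\<beta>\<in>B. \<theta> \<beta> ` H \<subseteq> H"
    and two: "\<exists>x\<in>H. \<exists>y\<in>H. x \<noteq> y"
    and Bne: "B \<noteq> {}"
    and lipK: "\<forall>w x y. set w \<subseteq> B \<longrightarrow> x \<in> H \<longrightarrow> y \<in> H \<longrightarrow>
         \<bar>theta_word \<theta> w x - theta_word \<theta> w y\<bar> \<le> K ^ length w * \<bar>x - y\<bar>"
    and \<epsilon>0: "\<epsilon> 0 = 1"
    and \<epsilon>_def: "\<forall>\<nu>\<ge>1. \<epsilon> \<nu> = Sup (Qset \<theta> B H \<nu>)"
    and \<mu>: "\<mu> \<ge> 1" and \<kappa>: "\<kappa> < 1"
    and contr: "\<forall>\<omega>\<in>words B \<mu>. \<forall>x\<in>H. \<forall>y\<in>H.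
           \<bar>theta_word \<theta> \<omega> x - theta_word \<theta> \<omega> y\<bar> \<le> \<kappa> * \<bar>x - y\<bar>"
begin

lemma Q_ne: "Qset \<theta> B H \<nu> \<noteq> {}"
proof -
  obtain x y where "x \<in> H" "y \<in> H" "x \<noteq> y" using two by auto
  moreover obtain w where "w \<in> words B \<nu>" using words_nonempty[OF Bne] by auto
  ultimately show ?thesis unfolding Qset_def by blast
qed

lemma Q_bdd: "bdd_above (Qset \<theta> B H \<nu>)"
proof (rule bdd_aboveI[of _ "K ^ \<nu>"])
  fix q assume "q \<in> Qset \<theta> B H \<nu>"
  then obtain w x y where q: "q = \<bar>theta_word \<theta> w x - theta_word \<theta> w y\<bar> / \<bar>x - y\<bar>"
    and w: "w \<in> words B \<nu>" and xy: "x \<in> H" "y \<in> H" "x \<noteq> y" unfolding Qset_def by blast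
  have "\<bar>theta_word \<theta> w x - theta_word \<theta> w y\<bar> \<le> K ^ \<nu> * \<bar>x - y\<bar>"
    using lipK w xy unfolding words_def by auto
  then show "q \<le> K ^ \<nu>" unfolding q using xy by (simp add: divide_le_eq)
qed

lemma Q_nonneg: "q \<in> Qset \<theta> B H \<nu> \<Longrightarrow> q \<ge> 0"
  unfolding Qset_def by auto

lemma eps_nonneg: "\<epsilon> \<nu> \<ge> 0"
proof (cases "\<nu> \<ge> 1")
  case True
  obtain q where q: "q \<in> Qset \<theta> B H \<nu>" using Q_ne by auto
  then have "q \<le> \<epsilon> \<nu>" using cSup_upper[OF q Q_bdd] \<epsilon>_def True by auto
  then show ?thesis using Q_nonneg[OF q] by linarith
next
  case False then have "\<nu> = 0" by simp
  then show ?thesis using \<epsilon>0 by auto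
qed

lemma eps_upper:
  assumes "\<omega> \<in> words B \<nu>" "x \<in> H" "y \<in> H" "x \<noteq> y"
  shows "\<bar>theta_word \<theta> \<omega> x - theta_word \<theta> \<omega> y\<bar> / \<bar>x - y\<bar> \<le> \<epsilon> \<nu>"
proof (cases "\<nu> \<ge> 1")
  case True
  have "\<bar>theta_word \<theta> \<omega> x - theta_word \<theta> \<omega> y\<bar> / \<bar>x - y\<bar> \<in> Qset \<theta> B H \<nu>"
    unfolding Qset_def using assms by blast
  then show ?thesis using cSup_upper[OF _ Q_bdd] \<epsilon>_def True by auto
next
  case False
  then have "\<nu> = 0" by simp
  then have "\<omega> = []" using assms(1) unfolding words_def by auto
  then show ?thesis using \<epsilon>0 assms \<open>\<nu> = 0\<close> by simp
qed

lemma eps_mult: "\<epsilon> (a + b) \<le> \<epsilon> a * \<epsilon> b"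
proof (cases "a = 0 \<or> b = 0")
  case True then show ?thesis using \<epsilon>0 by auto
next
  case False
  then have ab: "a + b \<ge> 1" by auto
  have "Sup (Qset \<theta> B H (a + b)) \<le> \<epsilon> a * \<epsilon> b"
  proof (rule cSup_least[OF Q_ne])
    fix q assume "q \<in> Qset \<theta> B H (a + b)"
    then obtain w x y where q: "q = \<bar>theta_word \<theta> w x - theta_word \<theta> w y\<bar> / \<bar>x - y\<bar>"
      and w: "w \<in> words B (a + b)" and xy: "x \<in> H" "y \<in> H" "x \<noteq> y" unfolding Qset_def by blast
    define u where "u = take a w"
    define v where "v = drop a w"
    have wuv: "w = u @ v" unfolding u_def v_def by simp
    have u: "u \<in> words B a" and v: "v \<in> words B b" using w unfolding u_def v_def words_def
      by (auto dest: in_set_takeD in_set_dropD)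
    let ?x = "theta_word \<theta> u x" and ?y = "theta_word \<theta> u y"
    have xyH: "?x \<in> H" "?y \<in> H" using theta_word_in[OF maps] u xy unfolding words_def by auto
    show "q \<le> \<epsilon> a * \<epsilon> b"
    proof (cases "?x = ?y")
      case True
      then have "q = 0" unfolding q wuv theta_word_append by simp
      then show ?thesis using eps_nonneg by simp
    next
      case False
      have q1: "\<bar>?x - ?y\<bar> / \<bar>x - y\<bar> \<le> \<epsilon> a" using eps_upper[OF u xy] .
      have q2: "\<bar>theta_word \<theta> v ?x - theta_word \<theta> v ?y\<bar> / \<bar>?x - ?y\<bar> \<le> \<epsilon> b"
        using eps_upper[OF v xyH False] .
      have "q = (\<bar>theta_word \<theta> v ?x - theta_word \<theta> v ?y\<bar> / \<bar>?x - ?y\<bar>) * (\<bar>?x - ?y\<bar> / \<bar>x - y\<bar>)"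
        unfolding q wuv theta_word_append using False by simp
      also have "\<dots> \<le> \<epsilon> b * \<epsilon> a"
        by (rule mult_mono[OF q2 q1]) (use eps_nonneg in auto)
      finally show ?thesis by (simp add: mult_ac)
    qed
  qed
  then show ?thesis using \<epsilon>_def ab by auto
qed

lemma eps_mu: "\<epsilon> \<mu> \<le> \<kappa>"
proof -
  have "Sup (Qset \<theta> B H \<mu>) \<le> \<kappa>"
  proof (rule cSup_least[OF Q_ne])
    fix q assume "q \<in> Qset \<theta> B H \<mu>"
    then obtain w x y where q: "q = \<bar>theta_word \<theta> w x - theta_word \<theta> w y\<bar> / \<bar>x - y\<bar>"
      and w: "w \<in> words B \<mu>" and xy: "x \<in> H" "y \<in> H" "x \<noteq> y" unfolding Qset_def by blast
    have "\<bar>theta_word \<theta> w x - theta_word \<theta> w y\<bar> \<le> \<kappa> * \<bar>x - y\<bar>" using contr w xy by auto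
    then show "q \<le> \<kappa>" unfolding q using xy by (simp add: divide_le_eq)
  qed
  then show ?thesis using \<epsilon>_def \<mu> by auto
qed

definition "\<kappa>1 = max \<kappa> (1/2)"
definition "A = (\<Sum>r<\<mu>. \<epsilon> r)"

lemma eps_block: "r < \<mu> \<Longrightarrow> \<epsilon> (\<mu> * q + r) \<le> \<kappa>1 ^ q * A"
proof (induction q)
  case 0
  have "\<epsilon> r \<le> A" unfolding A_def using 0 eps_nonneg
    by (intro member_le_sum) auto
  then show ?case by simp
next
  case (Suc q)
  have "\<epsilon> (\<mu> * Suc q + r) = \<epsilon> (\<mu> + (\<mu> * q + r))" by (simp add: algebra_simps)
  also have "\<dots> \<le> \<epsilon> \<mu> * \<epsilon> (\<mu> * q + r)" by (rule eps_mult)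
  also have "\<dots> \<le> \<kappa>1 * (\<kappa>1 ^ q * A)"
    by (rule mult_mono) (use eps_mu Suc eps_nonneg in \<open>auto simp: \<kappa>1_def\<close>)
  finally show ?case by simp
qed

lemma eps_geom: "\<exists>\<rho> C. 0 < \<rho> \<and> \<rho> < 1 \<and> (\<forall>\<nu>. \<epsilon> \<nu> \<le> C * \<rho> ^ \<nu>)"
proof -
  have k1: "0 < \<kappa>1" "\<kappa>1 < 1" unfolding \<kappa>1_def using \<kappa> by auto
  define \<rho> where "\<rho> = root \<mu> \<kappa>1"
  have \<rho>: "0 < \<rho>" "\<rho> < 1" unfolding \<rho>_def using k1 \<mu> by (auto simp: real_root_lt_1_iff)
  have \<rho>\<mu>: "\<rho> ^ \<mu> = \<kappa>1" unfolding \<rho>_def using k1 \<mu> by (simp add: real_root_pow_pos2)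
  have A0: "A \<ge> 0" unfolding A_def using eps_nonneg by (simp add: sum_nonneg)
  have "\<epsilon> \<nu> \<le> (A / \<kappa>1) * \<rho> ^ \<nu>" for \<nu>
  proof -
    define q where "q = \<nu> div \<mu>"
    define r where "r = \<nu> mod \<mu>"
    have \<nu>: "\<nu> = \<mu> * q + r" unfolding q_def r_def by simp
    have r: "r < \<mu>" unfolding r_def using \<mu> by auto
    have "\<epsilon> \<nu> \<le> \<kappa>1 ^ q * A" using eps_block[OF r] \<nu> by simp
    also have "\<kappa>1 ^ q = \<rho> ^ (\<mu> * q)" by (simp add: power_mult \<rho>\<mu>)
    also have "\<rho> ^ (\<mu> * q) \<le> \<rho> ^ (\<nu> - \<mu>)"
      by (rule power_decreasing) (use \<nu> r \<rho> in auto)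
    also have "\<rho> ^ (\<nu> - \<mu>) = \<rho> ^ (\<nu> - \<mu> + \<mu>) / \<kappa>1" using \<rho>\<mu> k1 by (simp add: power_add)
    also have "\<rho> ^ (\<nu> - \<mu> + \<mu>) \<le> \<rho> ^ \<nu>"
      by (rule power_decreasing) (use \<rho> in auto)
    finally show ?thesis using A0 k1
      by (smt (verit) divide_right_mono mult.commute mult_left_mono times_divide_eq_left)
  qed
  then show ?thesis using \<rho> by blast
qed

lemma eps_summable: "summable \<epsilon>"
proof -
  obtain \<rho> C where \<rho>: "0 < \<rho>" "\<rho> < 1" and b: "\<forall>\<nu>. \<epsilon> \<nu> \<le> C * \<rho> ^ \<nu>" using eps_geom by blast
  have "summable (\<lambda>\<nu>. C * \<rho> ^ \<nu>)" using \<rho> by (intro summable_mult summable_geometric) auto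
  then show ?thesis
    by (rule summable_comparison_test'[where N=0]) (use b eps_nonneg in auto)
qed

lemma eps_lim: "\<epsilon> \<longlonglongrightarrow> 0"
  using summable_LIMSEQ_zero[OF eps_summable] .

lemma eps_partial: "(\<Sum>k<N. \<epsilon> k) \<le> (\<Sum>k. \<epsilon> k)"
  by (rule sum_le_suminf[OF eps_summable]) (use eps_nonneg in auto)

end

lemma Cm_extract:
  assumes "Cm_closure m H f" "m \<ge> 1" "open H"
  shows "\<exists>g. continuous_on (closure H) f \<and> continuous_on (closure H) g \<and> (\<forall>x\<in>H. (f has_real_derivative g x) (at x))"
proof -
  obtain g where g0: "\<forall>x\<in>closure H. g 0 x = f x" and cont: "\<forall>k\<le>m. continuous_on (closure H) (g k)"
    and der: "\<forall>k<m. \<forall>x\<in>H. (g k has_real_derivative g (Suc k) x) (at x)"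
    using assms(1) unfolding Cm_closure_def by blast
  have "continuous_on (closure H) f" using cont g0 continuous_on_cong[of "closure H" "closure H" "g 0" f] by auto
  moreover have "continuous_on (closure H) (g 1)" using cont assms(2) by auto
  moreover have "\<forall>x\<in>H. (f has_real_derivative g 1 x) (at x)"
  proof
    fix x assume x: "x \<in> H"
    have "(g 0 has_real_derivative g 1 x) (at x)" using der assms(2) x by auto
    then show "(f has_real_derivative g 1 x) (at x)"
      by (rule has_field_derivative_transform_within_open[OF _ assms(3) x]) (use g0 closure_subset in auto)
  qed
  ultimately show ?thesis by blast
qed

locale Main = Hset +
  fixes B :: "'b set" and b \<theta> :: "'b \<Rightarrow> real \<Rightarrow> real" and s r :: real and v gv :: "real \<Rightarrow> real"
    and bD tD :: "'b \<Rightarrow> real \<Rightarrow> real" and \<epsilon> :: "nat \<Rightarrow> real" and C1 :: real and \<mu> :: nat and \<kappa> :: real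
  assumes finB: "finite B"
    and maps: "\<forall>\<beta>\<in>B. \<theta> \<beta> ` H \<subseteq> H"
    and bpos: "\<forall>\<beta>\<in>B. \<forall>x\<in>closure H. b \<beta> x > 0"
    and b_cont: "\<forall>\<beta>\<in>B. continuous_on (closure H) (b \<beta>)"
    and bD_cont: "\<forall>\<beta>\<in>B. continuous_on (closure H) (bD \<beta>)"
    and b_der: "\<forall>\<beta>\<in>B. \<forall>x\<in>H. (b \<beta> has_real_derivative bD \<beta> x) (at x)"
    and t_cont: "\<forall>\<beta>\<in>B. continuous_on (closure H) (\<theta> \<beta>)"
    and tD_cont: "\<forall>\<beta>\<in>B. continuous_on (closure H) (tD \<beta>)"
    and t_der: "\<forall>\<beta>\<in>B. \<forall>x\<in>H. (\<theta> \<beta> has_real_derivative tD \<beta> x) (at x)"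
    and v_cont: "continuous_on (closure H) v"
    and gv_cont: "continuous_on (closure H) gv"
    and v_der: "\<forall>x\<in>H. (v has_real_derivative gv x) (at x)"
    and vpos: "\<forall>x\<in>closure H. v x > 0"
    and rpos: "r > 0" and spos: "s > 0"
    and eig: "\<forall>x\<in>closure H. (\<Sum>\<beta>\<in>B. b \<beta> x powr s * v (\<theta> \<beta> x)) = r * v x"
    and \<epsilon>0: "\<epsilon> 0 = 1"
    and \<epsilon>_def: "\<forall>\<nu>\<ge>1. \<epsilon> \<nu> = Sup {\<bar>theta_word \<theta> \<omega> x - theta_word \<theta> \<omega> y\<bar> / \<bar>x - y\<bar> |
                   \<omega> x y. \<omega> \<in> words B \<nu> \<and> x \<in> H \<and> y \<in> H \<and> x \<noteq> y}"
    and C1_def: "C1 = Sup {\<bar>deriv (b \<beta>) x\<bar> / b \<beta> x | \<beta> x. \<beta> \<in> B \<and> x \<in> H}"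
    and \<mu>: "\<mu> \<ge> 1" and \<kappa>: "\<kappa> < 1"
    and contr: "\<forall>\<omega>\<in>words B \<mu>. \<forall>x\<in>closure H. \<forall>y\<in>closure H.
           \<bar>theta_word \<theta> \<omega> x - theta_word \<theta> \<omega> y\<bar> \<le> \<kappa> * \<bar>x - y\<bar>"
    and Hne: "H \<noteq> {}"
begin

lemma Bne: "B \<noteq> {}"
proof
  assume "B = {}"
  obtain x where x: "x \<in> H" using Hne by auto
  then have "x \<in> closure H" using closure_subset by auto
  then have "0 = r * v x" using eig \<open>B = {}\<close> by auto
  moreover have "r * v x > 0" using rpos vpos \<open>x \<in> closure H\<close> by auto
  ultimately show False by linarith
qed

lemma two: "\<exists>x\<in>H. \<exists>y\<in>H. x \<noteq> y"
proof -
  obtain x where x: "x \<in> H" using Hne by auto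
  then obtain j where j: "j \<in> {1..n}" "x \<in> {c j<..<d j}" unfolding H_def by auto
  then have "(x + d j) / 2 \<in> H" "(x + d j) / 2 \<noteq> x" unfolding H_def by (auto intro!: bexI[of _ j])
  then show ?thesis using x by blast
qed

lemma vposH: "x \<in> H \<Longrightarrow> v x > 0" using vpos closure_subset by auto
lemma bposH: "\<forall>\<beta>\<in>B. \<forall>x\<in>H. b \<beta> x > 0" using bpos closure_subset by auto

lemma lipK: "\<exists>K. \<forall>w x y. set w \<subseteq> B \<longrightarrow> x \<in> H \<longrightarrow> y \<in> H \<longrightarrow>
         \<bar>theta_word \<theta> w x - theta_word \<theta> w y\<bar> \<le> K ^ length w * \<bar>x - y\<bar>"
proof -
  have "\<forall>\<beta>\<in>B. \<exists>K\<ge>0. \<forall>x\<in>H. \<forall>y\<in>H. \<bar>\<theta> \<beta> x - \<theta> \<beta> y\<bar> \<le> K * \<bar>x - y\<bar>"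
    using lipschitz_H t_cont tD_cont t_der by blast
  then obtain Kf where Kf: "\<forall>\<beta>\<in>B. Kf \<beta> \<ge> 0 \<and> (\<forall>x\<in>H. \<forall>y\<in>H. \<bar>\<theta> \<beta> x - \<theta> \<beta> y\<bar> \<le> Kf \<beta> * \<bar>x - y\<bar>)"
    by metis
  define K where "K = (\<Sum>\<beta>\<in>B. Kf \<beta>)"
  have K0: "K \<ge> 0" unfolding K_def using Kf by (simp add: sum_nonneg)
  have "\<forall>\<beta>\<in>B. \<forall>x\<in>H. \<forall>y\<in>H. \<bar>\<theta> \<beta> x - \<theta> \<beta> y\<bar> \<le> K * \<bar>x - y\<bar>"
  proof (intro ballI)
    fix \<beta> x y assume \<beta>: "\<beta> \<in> B" and xy: "x \<in> H" "y \<in> H"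
    have "Kf \<beta> \<le> K" unfolding K_def using Kf \<beta> finB by (intro member_le_sum) auto
    then have "Kf \<beta> * \<bar>x - y\<bar> \<le> K * \<bar>x - y\<bar>" by (intro mult_right_mono) auto
    then show "\<bar>\<theta> \<beta> x - \<theta> \<beta> y\<bar> \<le> K * \<bar>x - y\<bar>" using Kf \<beta> xy by force
  qed
  then show ?thesis using theta_word_lip[OF maps _ K0] by blast
qed

end

context Main begin

definition "Kc = (SOME K. \<forall>w x y. set w \<subseteq> B \<longrightarrow> x \<in> H \<longrightarrow> y \<in> H \<longrightarrow>
         \<bar>theta_word \<theta> w x - theta_word \<theta> w y\<bar> \<le> K ^ length w * \<bar>x - y\<bar>)"

lemma lipKc: "\<forall>w x y. set w \<subseteq> B \<longrightarrow> x \<in> H \<longrightarrow> y \<in> H \<longrightarrow>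
         \<bar>theta_word \<theta> w x - theta_word \<theta> w y\<bar> \<le> Kc ^ length w * \<bar>x - y\<bar>"
  unfolding Kc_def using someI_ex[OF lipK] .

sublocale E: Eps B \<theta> H \<epsilon> \<mu> \<kappa> Kc
proof
  show "\<forall>\<beta>\<in>B. \<theta> \<beta> ` H \<subseteq> H" by (rule maps)
  show "\<exists>x\<in>H. \<exists>y\<in>H. x \<noteq> y" by (rule two)
  show "B \<noteq> {}" by (rule Bne)
  show "\<forall>w x y. set w \<subseteq> B \<longrightarrow> x \<in> H \<longrightarrow> y \<in> H \<longrightarrow>
         \<bar>theta_word \<theta> w x - theta_word \<theta> w y\<bar> \<le> Kc ^ length w * \<bar>x - y\<bar>" by (rule lipKc)
  show "\<epsilon> 0 = 1" by (rule \<epsilon>0)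
  show "\<forall>\<nu>\<ge>1. \<epsilon> \<nu> = Sup (Qset \<theta> B H \<nu>)" using \<epsilon>_def unfolding Qset_def by blast
  show "1 \<le> \<mu>" by (rule \<mu>)
  show "\<kappa> < 1" by (rule \<kappa>)
  show "\<forall>\<omega>\<in>words B \<mu>. \<forall>x\<in>H. \<forall>y\<in>H. \<bar>theta_word \<theta> \<omega> x - theta_word \<theta> \<omega> y\<bar> \<le> \<kappa> * \<bar>x - y\<bar>"
    using contr closure_subset by blast
qed

lemma thD_bound: "\<forall>\<pi> x. set \<pi> \<subseteq> B \<longrightarrow> x \<in> H \<longrightarrow> \<bar>thD \<theta> tD \<pi> x\<bar> \<le> \<epsilon> (length \<pi>)"
proof (intro allI impI)
  fix \<pi> x assume \<pi>: "set \<pi> \<subseteq> B" and x: "x \<in> H"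
  have w: "\<pi> \<in> words B (length \<pi>)" using \<pi> unfolding words_def by auto
  show "\<bar>thD \<theta> tD \<pi> x\<bar> \<le> \<epsilon> (length \<pi>)"
  proof (rule deriv_bound_dq[OF open_H x theta_deriv[OF maps t_der \<pi> x]])
    fix y assume "y \<in> H" "y \<noteq> x"
    then show "\<bar>theta_word \<theta> \<pi> y - theta_word \<theta> \<pi> x\<bar> / \<bar>y - x\<bar> \<le> \<epsilon> (length \<pi>)"
      using E.eps_upper[OF w _ x] by auto
  qed
qed

lemma C1_props: "C1 \<ge> 0 \<and> (\<forall>\<beta>\<in>B. \<forall>y\<in>H. \<bar>bD \<beta> y / b \<beta> y\<bar> \<le> C1)"
proof -
  let ?S = "{\<bar>deriv (b \<beta>) x\<bar> / b \<beta> x | \<beta> x. \<beta> \<in> B \<and> x \<in> H}"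
  have "\<forall>\<beta>\<in>B. \<exists>K. \<forall>y\<in>closure H. \<bar>bD \<beta> y / b \<beta> y\<bar> \<le> K"
  proof
    fix \<beta> assume \<beta>: "\<beta> \<in> B"
    have "continuous_on (closure H) (\<lambda>y. bD \<beta> y / b \<beta> y)"
      using bD_cont b_cont bpos \<beta> by (intro continuous_intros) (auto, fastforce)
    then show "\<exists>K. \<forall>y\<in>closure H. \<bar>bD \<beta> y / b \<beta> y\<bar> \<le> K" by (rule compact_bound[OF compact_cH])
  qed
  from finite_uniform_bound[OF finB this] obtain K where K: "\<forall>\<beta>\<in>B. \<forall>y\<in>closure H. \<bar>bD \<beta> y / b \<beta> y\<bar> \<le> K"
    by blast
  have eq: "\<And>\<beta> x. \<beta> \<in> B \<Longrightarrow> x \<in> H \<Longrightarrow> \<bar>deriv (b \<beta>) x\<bar> / b \<beta> x = \<bar>bD \<beta> x / b \<beta> x\<bar>"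
  proof -
    fix \<beta> x assume "\<beta> \<in> B" "x \<in> H"
    then have "deriv (b \<beta>) x = bD \<beta> x" "b \<beta> x > 0" using b_der bposH by (auto intro: DERIV_imp_deriv)
    then show "\<bar>deriv (b \<beta>) x\<bar> / b \<beta> x = \<bar>bD \<beta> x / b \<beta> x\<bar>" by (simp add: abs_divide)
  qed
  have bdd: "bdd_above ?S"
  proof (rule bdd_aboveI[of _ K])
    fix q assume "q \<in> ?S"
    then obtain \<beta> x where q: "q = \<bar>deriv (b \<beta>) x\<bar> / b \<beta> x" and bx: "\<beta> \<in> B" "x \<in> H" by blast
    have "x \<in> closure H" using bx closure_subset by auto
    then have "\<bar>bD \<beta> x / b \<beta> x\<bar> \<le> K" using K bx by blast
    then show "q \<le> K" unfolding q eq[OF bx] .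
  qed
  have up: "\<forall>\<beta>\<in>B. \<forall>y\<in>H. \<bar>bD \<beta> y / b \<beta> y\<bar> \<le> C1"
  proof (intro ballI)
    fix \<beta> y assume "\<beta> \<in> B" "y \<in> H"
    then have "\<bar>deriv (b \<beta>) y\<bar> / b \<beta> y \<in> ?S" by blast
    from cSup_upper[OF this bdd] have "\<bar>deriv (b \<beta>) y\<bar> / b \<beta> y \<le> C1" unfolding C1_def .
    then show "\<bar>bD \<beta> y / b \<beta> y\<bar> \<le> C1" unfolding eq[OF \<open>\<beta> \<in> B\<close> \<open>y \<in> H\<close>] .
  qed
  obtain \<beta> where "\<beta> \<in> B" using Bne by auto
  moreover obtain y where "y \<in> H" using Hne by auto
  ultimately have "0 \<le> C1" using up by (meson abs_ge_zero order_trans)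
  then show ?thesis using up by blast
qed

lemma M_bound: "\<exists>M. \<forall>y\<in>closure H. \<bar>gv y / v y\<bar> \<le> M"
proof -
  have "continuous_on (closure H) (\<lambda>y. gv y / v y)"
    using gv_cont v_cont vpos by (intro continuous_intros) auto
  then show ?thesis by (rule compact_bound[OF compact_cH])
qed

end

lemma powr_m1_mult: "(y::real) > 0 \<Longrightarrow> y powr (s - 1) * y = y powr s"
proof -
  assume "y > 0"
  have "y powr (s - 1) * y powr 1 = y powr (s - 1 + 1)" by (rule powr_add[symmetric])
  then show ?thesis using \<open>y > 0\<close> by simp
qed

context Main begin

abbreviation "bL \<equiv> (\<lambda>j y. bD j y / b j y)"

lemma formula:
  assumes x: "x \<in> H"
  shows "gv x = (1 / r ^ N) * (\<Sum>w\<in>words B N. (b_word b \<theta> w x powr s * v (theta_word \<theta> w x)) *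
            (s * LD \<theta> tD bL w x + gv (theta_word \<theta> w x) / v (theta_word \<theta> w x) * thD \<theta> tD w x))"
proof -
  define F where "F y = (1 / r ^ N) * (\<Sum>w\<in>words B N. b_word b \<theta> w y powr s * v (theta_word \<theta> w y))" for y
  have eigH: "\<forall>y\<in>H. (\<Sum>\<beta>\<in>B. b \<beta> y powr s * v (\<theta> \<beta> y)) = r * v y" using eig closure_subset by auto
  have Feq: "F y = v y" if y: "y \<in> H" for y
    unfolding F_def using eigen_iter[OF finB maps bposH eigH y, of N] rpos by simp
  have termD: "((\<lambda>y. b_word b \<theta> w y powr s * v (theta_word \<theta> w y)) has_real_derivative
      (b_word b \<theta> w x powr s * v (theta_word \<theta> w x)) *
            (s * LD \<theta> tD bL w x + gv (theta_word \<theta> w x) / v (theta_word \<theta> w x) * thD \<theta> tD w x)) (at x)"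
    if w: "w \<in> words B N" for w
  proof -
    have sw: "set w \<subseteq> B" using w unfolding words_def by auto
    let ?bw = "b_word b \<theta> w" and ?y = "theta_word \<theta> w x"
    have bw0: "?bw x > 0" using b_word_pos[OF maps bposH sw x] .
    have y: "?y \<in> H" using theta_word_in[OF maps sw x] .
    have vy: "v ?y > 0" using vposH[OF y] .
    have Db: "(?bw has_real_derivative ?bw x * LD \<theta> tD bL w x) (at x)"
      using b_deriv[OF maps t_der b_der bposH sw x] .
    have D1: "((\<lambda>y. ?bw y powr s) has_real_derivative s * ?bw x powr (s - 1) * (?bw x * LD \<theta> tD bL w x)) (at x)"
      by (rule derivative_intros(71)[OF bw0 Db])
    have D2: "((\<lambda>y. v (theta_word \<theta> w y)) has_real_derivative gv ?y * thD \<theta> tD w x) (at x)"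
      by (rule DERIV_chain2[where f=v and g="theta_word \<theta> w", OF _ theta_deriv[OF maps t_der sw x]])
        (use v_der y in auto)
    have "((\<lambda>y. ?bw y powr s * v (theta_word \<theta> w y)) has_real_derivative
       s * ?bw x powr (s - 1) * (?bw x * LD \<theta> tD bL w x) * v ?y + gv ?y * thD \<theta> tD w x * ?bw x powr s) (at x)"
      by (rule DERIV_mult[OF D1 D2])
    moreover have "s * ?bw x powr (s - 1) * (?bw x * LD \<theta> tD bL w x) * v ?y + gv ?y * thD \<theta> tD w x * ?bw x powr s
      = (?bw x powr s * v ?y) * (s * LD \<theta> tD bL w x + gv ?y / v ?y * thD \<theta> tD w x)"
    proof -
      have "s * ?bw x powr (s - 1) * (?bw x * LD \<theta> tD bL w x) * v ?y = s * (?bw x powr (s - 1) * ?bw x) * LD \<theta> tD bL w x * v ?y"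
        by (simp add: mult_ac)
      also have "\<dots> = s * ?bw x powr s * LD \<theta> tD bL w x * v ?y" using powr_m1_mult[OF bw0] by simp
      finally show ?thesis using vy by (simp add: field_simps)
    qed
    ultimately show ?thesis by simp
  qed
  have "(F has_real_derivative (1 / r ^ N) * (\<Sum>w\<in>words B N. (b_word b \<theta> w x powr s * v (theta_word \<theta> w x)) *
            (s * LD \<theta> tD bL w x + gv (theta_word \<theta> w x) / v (theta_word \<theta> w x) * thD \<theta> tD w x))) (at x)"
    unfolding F_def by (intro DERIV_cmult DERIV_sum termD)
  then have "(v has_real_derivative (1 / r ^ N) * (\<Sum>w\<in>words B N. (b_word b \<theta> w x powr s * v (theta_word \<theta> w x)) *
            (s * LD \<theta> tD bL w x + gv (theta_word \<theta> w x) / v (theta_word \<theta> w x) * thD \<theta> tD w x))) (at x)"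
    by (rule has_field_derivative_transform_within_open[OF _ open_H x]) (rule Feq)
  then show ?thesis using DERIV_unique v_der x by blast
qed

end

context Main begin

lemma LD_bd:
  assumes w: "w \<in> words B N" and x: "x \<in> H"
  shows "\<bar>LD \<theta> tD bL w x\<bar> \<le> C1 * (\<Sum>k<N. \<epsilon> k)"
proof -
  have sw: "set w \<subseteq> B" and lw: "length w = N" using w unfolding words_def by auto
  have bLb: "\<forall>j\<in>B. \<forall>y\<in>H. \<bar>bL j y\<bar> \<le> C1" using C1_props by blast
  have "\<bar>LD \<theta> tD bL w (theta_word \<theta> [] x) * thD \<theta> tD [] x\<bar> \<le> C1 * (\<Sum>k<length w. \<epsilon> (length [] + k))"
    using LD_bound[OF maps bLb thD_bound sw _ x, of "[]"] by simp
  then show ?thesis using lw by simp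
qed

lemma wsum:
  assumes x: "x \<in> H"
  shows "(\<Sum>w\<in>words B N. b_word b \<theta> w x powr s * v (theta_word \<theta> w x)) = r ^ N * v x"
proof -
  have eigH: "\<forall>y\<in>H. (\<Sum>\<beta>\<in>B. b \<beta> y powr s * v (\<theta> \<beta> y)) = r * v y" using eig closure_subset by blast
  show ?thesis by (rule eigen_iter[OF finB maps bposH eigH x])
qed

lemma wt_nonneg:
  assumes w: "w \<in> words B N" and x: "x \<in> H"
  shows "b_word b \<theta> w x powr s * v (theta_word \<theta> w x) \<ge> 0"
proof -
  have sw: "set w \<subseteq> B" using w unfolding words_def by auto
  have "v (theta_word \<theta> w x) > 0" by (rule vposH[OF theta_word_in[OF maps sw x]])
  then show ?thesis by simp
qed

lemma part1_N:
  assumes x: "x \<in> H" and M: "\<forall>y\<in>closure H. \<bar>gv y / v y\<bar> \<le> M" and M0: "M \<ge> 0"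
  shows "\<bar>gv x\<bar> \<le> v x * (s * C1 * (\<Sum>k<N. \<epsilon> k) + M * \<epsilon> N)"
proof -
  let ?R = "s * C1 * (\<Sum>k<N. \<epsilon> k) + M * \<epsilon> N"
  let ?wt = "\<lambda>w. b_word b \<theta> w x powr s * v (theta_word \<theta> w x)"
  let ?X = "\<lambda>w. s * LD \<theta> tD bL w x + gv (theta_word \<theta> w x) / v (theta_word \<theta> w x) * thD \<theta> tD w x"
  have X: "\<bar>?X w\<bar> \<le> ?R" if w: "w \<in> words B N" for w
  proof -
    have sw: "set w \<subseteq> B" and lw: "length w = N" using w unfolding words_def by auto
    have y: "theta_word \<theta> w x \<in> closure H" using theta_word_in[OF maps sw x] closure_subset by auto
    have 1: "\<bar>s * LD \<theta> tD bL w x\<bar> \<le> s * (C1 * (\<Sum>k<N. \<epsilon> k))"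
      using LD_bd[OF w x] spos by (simp add: abs_mult)
    have 2: "\<bar>gv (theta_word \<theta> w x) / v (theta_word \<theta> w x) * thD \<theta> tD w x\<bar> \<le> M * \<epsilon> N"
      unfolding abs_mult by (rule mult_mono) (use M y thD_bound sw x lw M0 in auto)
    have "\<bar>?X w\<bar> \<le> \<bar>s * LD \<theta> tD bL w x\<bar> + \<bar>gv (theta_word \<theta> w x) / v (theta_word \<theta> w x) * thD \<theta> tD w x\<bar>"
      by (rule abs_triangle_ineq)
    then show ?thesis using 1 2 by (simp add: mult_ac)
  qed
  have f: "gv x = (1 / r ^ N) * (\<Sum>w\<in>words B N. ?wt w * ?X w)" by (rule formula[OF x])
  have "\<bar>gv x\<bar> = \<bar>(1 / r ^ N) * (\<Sum>w\<in>words B N. ?wt w * ?X w)\<bar>" using f by (rule arg_cong)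
  also have "\<dots> = \<bar>1 / r ^ N\<bar> * \<bar>\<Sum>w\<in>words B N. ?wt w * ?X w\<bar>" by (rule abs_mult)
  also have "\<bar>1 / r ^ N\<bar> * \<bar>\<Sum>w\<in>words B N. ?wt w * ?X w\<bar> = (1 / r ^ N) * \<bar>\<Sum>w\<in>words B N. ?wt w * ?X w\<bar>" using rpos by simp
  also have "\<dots> \<le> (1 / r ^ N) * (\<Sum>w\<in>words B N. ?wt w * ?R)"
  proof (rule mult_left_mono)
    have "\<bar>\<Sum>w\<in>words B N. ?wt w * ?X w\<bar> \<le> (\<Sum>w\<in>words B N. \<bar>?wt w * ?X w\<bar>)" by (rule sum_abs)
    also have "\<dots> \<le> (\<Sum>w\<in>words B N. ?wt w * ?R)"
    proof (rule sum_mono)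
      fix w assume w: "w \<in> words B N"
      have "\<bar>?wt w * ?X w\<bar> = ?wt w * \<bar>?X w\<bar>" by (simp only: abs_mult[of "?wt w" "?X w"] abs_of_nonneg[OF wt_nonneg[OF w x]])
      also have "\<dots> \<le> ?wt w * ?R" by (rule mult_left_mono[OF X[OF w] wt_nonneg[OF w x]])
      finally show "\<bar>?wt w * ?X w\<bar> \<le> ?wt w * ?R" .
    qed
    finally show "\<bar>\<Sum>w\<in>words B N. ?wt w * ?X w\<bar> \<le> (\<Sum>w\<in>words B N. ?wt w * ?R)" .
    show "0 \<le> 1 / r ^ N" using rpos by simp
  qed
  also have "\<dots> = (1 / r ^ N) * (r ^ N * v x) * ?R" by (simp add: sum_distrib_right[symmetric] wsum[OF x])
  also have "\<dots> = v x * ?R" using rpos by simp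
  finally show ?thesis .
qed

lemma part1_H:
  assumes x: "x \<in> H"
  shows "\<bar>gv x\<bar> / v x \<le> C1 * s * (\<Sum>\<nu>. \<epsilon> \<nu>)"
proof -
  obtain M where M: "\<forall>y\<in>closure H. \<bar>gv y / v y\<bar> \<le> M" using M_bound by blast
  have M0: "M \<ge> 0" using M Hne closure_subset by (meson abs_ge_zero equals0I order_trans subsetD)
  have vx: "v x > 0" using vposH[OF x] .
  have C10: "C1 \<ge> 0" using C1_props by auto
  have "\<bar>gv x\<bar> / v x \<le> s * C1 * (\<Sum>\<nu>. \<epsilon> \<nu>) + M * \<epsilon> N" for N
  proof -
    have "\<bar>gv x\<bar> / v x \<le> s * C1 * (\<Sum>k<N. \<epsilon> k) + M * \<epsilon> N"
      using part1_N[OF x M M0, of N] vx by (simp add: divide_le_eq mult_ac)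
    also have "\<dots> \<le> s * C1 * (\<Sum>\<nu>. \<epsilon> \<nu>) + M * \<epsilon> N"
      using E.eps_partial[of N] spos C10 by (simp add: mult_left_mono)
    finally show ?thesis .
  qed
  moreover have "(\<lambda>N. s * C1 * (\<Sum>\<nu>. \<epsilon> \<nu>) + M * \<epsilon> N) \<longlonglongrightarrow> s * C1 * (\<Sum>\<nu>. \<epsilon> \<nu>) + M * 0"
    by (intro tendsto_intros E.eps_lim)
  ultimately have "\<bar>gv x\<bar> / v x \<le> s * C1 * (\<Sum>\<nu>. \<epsilon> \<nu>) + M * 0"
    by (intro LIMSEQ_le_const[of _ "s * C1 * (\<Sum>\<nu>. \<epsilon> \<nu>) + M * 0"]) auto
  then show ?thesis by (simp add: mult_ac)
qed

lemma part2_H: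
  assumes x: "x \<in> H"
    and hyp: "\<forall>\<nu>\<ge>1. \<forall>\<omega>\<in>words B \<nu>. \<forall>x\<in>closure H.
               (-1::real) ^ \<delta> * Dwithin (closure H) (b_word b \<theta> \<omega>) x / b_word b \<theta> \<omega> x \<le> 0"
  shows "(-1::real) ^ \<delta> * gv x \<le> 0"
proof -
  obtain M where M: "\<forall>y\<in>closure H. \<bar>gv y / v y\<bar> \<le> M" using M_bound by blast
  have M0: "M \<ge> 0" using M Hne closure_subset by (meson abs_ge_zero equals0I order_trans subsetD)
  have vx: "v x > 0" using vposH[OF x] .
  have xi: "x \<in> interior (closure H)" using interior_maximal[OF closure_subset open_H] x by auto
  let ?sg = "(-1::real) ^ \<delta>"
  have sg: "\<bar>?sg\<bar> = 1" by simp
  have bnd: "?sg * gv x \<le> v x * (M * \<epsilon> N)" if N: "N \<ge> 1" for N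
  proof -
    let ?wt = "\<lambda>w. b_word b \<theta> w x powr s * v (theta_word \<theta> w x)"
    let ?X = "\<lambda>w. s * LD \<theta> tD bL w x + gv (theta_word \<theta> w x) / v (theta_word \<theta> w x) * thD \<theta> tD w x"
    have X: "?sg * ?X w \<le> M * \<epsilon> N" if w: "w \<in> words B N" for w
    proof -
      have sw: "set w \<subseteq> B" and lw: "length w = N" using w unfolding words_def by auto
      have y: "theta_word \<theta> w x \<in> closure H" using theta_word_in[OF maps sw x] closure_subset by auto
      have bw0: "b_word b \<theta> w x > 0" using b_word_pos[OF maps bposH sw x] .
      have "Dwithin (closure H) (b_word b \<theta> w) x = b_word b \<theta> w x * LD \<theta> tD bL w x"
        by (rule Dwithin_at[OF xi b_deriv[OF maps t_der b_der bposH sw x]])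
      moreover have "?sg * Dwithin (closure H) (b_word b \<theta> w) x / b_word b \<theta> w x \<le> 0"
        using hyp N w x closure_subset by blast
      ultimately have "?sg * (b_word b \<theta> w x * LD \<theta> tD bL w x) / b_word b \<theta> w x \<le> 0"
        by simp
      then have L: "?sg * LD \<theta> tD bL w x \<le> 0" using bw0 by (simp add: field_simps)
      have 2: "\<bar>gv (theta_word \<theta> w x) / v (theta_word \<theta> w x) * thD \<theta> tD w x\<bar> \<le> M * \<epsilon> N"
        unfolding abs_mult by (rule mult_mono) (use M y thD_bound sw x lw M0 in auto)
      have "?sg * ?X w = s * (?sg * LD \<theta> tD bL w x) + ?sg * (gv (theta_word \<theta> w x) / v (theta_word \<theta> w x) * thD \<theta> tD w x)"
        by (simp add: algebra_simps)
      also have "\<dots> \<le> 0 + \<bar>gv (theta_word \<theta> w x) / v (theta_word \<theta> w x) * thD \<theta> tD w x\<bar>"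
      proof (rule add_mono)
        show "s * (?sg * LD \<theta> tD bL w x) \<le> 0" using L spos by (simp add: mult_nonneg_nonpos)
        have "?sg * (gv (theta_word \<theta> w x) / v (theta_word \<theta> w x) * thD \<theta> tD w x)
            \<le> \<bar>?sg * (gv (theta_word \<theta> w x) / v (theta_word \<theta> w x) * thD \<theta> tD w x)\<bar>" by (rule abs_ge_self)
        also have "\<dots> = \<bar>gv (theta_word \<theta> w x) / v (theta_word \<theta> w x) * thD \<theta> tD w x\<bar>"
          by (simp add: abs_mult)
        finally show "?sg * (gv (theta_word \<theta> w x) / v (theta_word \<theta> w x) * thD \<theta> tD w x)
            \<le> \<bar>gv (theta_word \<theta> w x) / v (theta_word \<theta> w x) * thD \<theta> tD w x\<bar>" .
      qed
      finally show ?thesis using 2 by simp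
    qed
    have "?sg * gv x = (1 / r ^ N) * (\<Sum>w\<in>words B N. ?wt w * (?sg * ?X w))"
      using formula[OF x, of N] by (simp add: sum_distrib_left mult_ac)
    also have "\<dots> \<le> (1 / r ^ N) * (\<Sum>w\<in>words B N. ?wt w * (M * \<epsilon> N))"
      by (intro mult_left_mono sum_mono) (use wt_nonneg x X rpos in auto)
    also have "\<dots> = (1 / r ^ N) * (r ^ N * v x) * (M * \<epsilon> N)" by (simp add: sum_distrib_right[symmetric] wsum[OF x])
    also have "\<dots> = v x * (M * \<epsilon> N)" using rpos by simp
    finally show ?thesis .
  qed
  have "(\<lambda>N. v x * (M * \<epsilon> N)) \<longlonglongrightarrow> v x * (M * 0)"
    by (intro tendsto_intros E.eps_lim)
  then have "?sg * gv x \<le> v x * (M * 0)"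
    by (rule LIMSEQ_le_const) (use bnd in auto)
  then show ?thesis by simp
qed

end

context Main begin

lemma final1: "\<forall>x\<in>closure H. \<bar>Dwithin (closure H) v x\<bar> / v x \<le> C1 * s * (\<Sum>\<nu>. \<epsilon> \<nu>)"
proof
  fix x assume x: "x \<in> closure H"
  have "Dwithin (closure H) v x = gv x" by (rule Dwithin_closure[OF v_cont gv_cont v_der x])
  moreover have "\<bar>gv x\<bar> / v x \<le> C1 * s * (\<Sum>\<nu>. \<epsilon> \<nu>)"
  proof (rule continuous_le_on_closure[where f="\<lambda>x. \<bar>gv x\<bar> / v x", OF _ x])
    show "continuous_on (closure H) (\<lambda>x. \<bar>gv x\<bar> / v x)"
      using gv_cont v_cont vpos by (intro continuous_intros) (auto simp: less_imp_neq[symmetric])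
    show "\<And>x. x \<in> H \<Longrightarrow> \<bar>gv x\<bar> / v x \<le> C1 * s * (\<Sum>\<nu>. \<epsilon> \<nu>)" by (rule part1_H)
  qed
  ultimately show "\<bar>Dwithin (closure H) v x\<bar> / v x \<le> C1 * s * (\<Sum>\<nu>. \<epsilon> \<nu>)" by simp
qed

lemma final2: "\<forall>\<delta>::nat\<in>{0,1}.
            (\<forall>\<nu>\<ge>1. \<forall>\<omega>\<in>words B \<nu>. \<forall>x\<in>closure H.
               (-1::real) ^ \<delta> * Dwithin (closure H) (b_word b \<theta> \<omega>) x / b_word b \<theta> \<omega> x \<le> 0)
            \<longrightarrow> (\<forall>x\<in>closure H. (-1::real) ^ \<delta> * Dwithin (closure H) v x \<le> 0)"
proof (intro ballI impI)
  fix \<delta> :: nat and x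
  assume hyp: "\<forall>\<nu>\<ge>1. \<forall>\<omega>\<in>words B \<nu>. \<forall>x\<in>closure H.
               (-1::real) ^ \<delta> * Dwithin (closure H) (b_word b \<theta> \<omega>) x / b_word b \<theta> \<omega> x \<le> 0"
    and x: "x \<in> closure H"
  have "Dwithin (closure H) v x = gv x" by (rule Dwithin_closure[OF v_cont gv_cont v_der x])
  moreover have "(-1::real) ^ \<delta> * gv x \<le> 0"
  proof (rule continuous_le_on_closure[where f="\<lambda>x. (-1::real) ^ \<delta> * gv x", OF _ x])
    show "continuous_on (closure H) (\<lambda>x. (-1::real) ^ \<delta> * gv x)"
      using gv_cont by (intro continuous_intros)
    show "\<And>x. x \<in> H \<Longrightarrow> (-1::real) ^ \<delta> * gv x \<le> 0" using part2_H hyp by blast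
  qed
  ultimately show "(-1::real) ^ \<delta> * Dwithin (closure H) v x \<le> 0" by simp
qed

end

theorem theorem6p1:
  fixes n m :: nat and c d :: "nat \<Rightarrow> real" and H :: "real set"
    and B :: "'b set" and b \<theta> :: "'b \<Rightarrow> real \<Rightarrow> real"
    and s r :: real and v :: "real \<Rightarrow> real"
    and \<epsilon> :: "nat \<Rightarrow> real" and C1 :: real
  assumes H_def: "H = (\<Union>j\<in>{1..n}. {c j<..<d j})"
    and cd: "\<forall>j\<in>{1..n}. c j < d j"
    and disj: "\<forall>j\<in>{1..n}. \<forall>k\<in>{1..n}. j \<noteq> k \<longrightarrow> {c j..d j} \<inter> {c k..d k} = {}"
    and finB: "finite B"
    and m: "m \<ge> 1"
    and b_Cm: "\<forall>\<beta>\<in>B. Cm_closure m H (b \<beta>)"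
    and \<theta>_Cm: "\<forall>\<beta>\<in>B. Cm_closure m H (\<theta> \<beta>)"
    and b_pos: "\<forall>\<beta>\<in>B. \<forall>x\<in>closure H. b \<beta> x > 0"
    and \<theta>_maps: "\<forall>\<beta>\<in>B. \<theta> \<beta> ` H \<subseteq> H"
    and contr: "\<exists>\<mu>::nat. \<mu> \<ge> 1 \<and> (\<exists>\<kappa>::real. \<kappa> < 1 \<and>
        (\<forall>\<omega>\<in>words B \<mu>. \<forall>x\<in>closure H. \<forall>y\<in>closure H.
           \<bar>theta_word \<theta> \<omega> x - theta_word \<theta> \<omega> y\<bar> \<le> \<kappa> * \<bar>x - y\<bar>))"
    and s: "s > 0"
    and v_Cm: "Cm_closure m H v"
    and v_pos: "\<forall>x\<in>closure H. v x > 0"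
    and r_pos: "r > 0"
    and eig: "\<forall>x\<in>closure H. (\<Sum>\<beta>\<in>B. b \<beta> x powr s * v (\<theta> \<beta> x)) = r * v x"
    and \<epsilon>0: "\<epsilon> 0 = 1"
    and \<epsilon>_def: "\<forall>\<nu>\<ge>1. \<epsilon> \<nu> = Sup {\<bar>theta_word \<theta> \<omega> x - theta_word \<theta> \<omega> y\<bar> / \<bar>x - y\<bar> |
                   \<omega> x y. \<omega> \<in> words B \<nu> \<and> x \<in> H \<and> y \<in> H \<and> x \<noteq> y}"
    and C1_def: "C1 = Sup {\<bar>deriv (b \<beta>) x\<bar> / b \<beta> x | \<beta> x. \<beta> \<in> B \<and> x \<in> H}"
  shows "(\<forall>x\<in>closure H. \<bar>Dwithin (closure H) v x\<bar> / v x \<le> C1 * s * (\<Sum>\<nu>. \<epsilon> \<nu>))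
       \<and> (\<forall>\<delta>::nat\<in>{0,1}.
            (\<forall>\<nu>\<ge>1. \<forall>\<omega>\<in>words B \<nu>. \<forall>x\<in>closure H.
               (-1::real) ^ \<delta> * Dwithin (closure H) (b_word b \<theta> \<omega>) x / b_word b \<theta> \<omega> x \<le> 0)
            \<longrightarrow> (\<forall>x\<in>closure H. (-1::real) ^ \<delta> * Dwithin (closure H) v x \<le> 0))"
proof (cases "H = {}")
  case True
  then show ?thesis by simp
next
  case False
  interpret Hset n c d H using H_def cd disj by unfold_locales
  obtain \<mu> \<kappa> where \<mu>: "\<mu> \<ge> 1" and \<kappa>: "\<kappa> < 1" and contr': "\<forall>\<omega>\<in>words B \<mu>. \<forall>x\<in>closure H. \<forall>y\<in>closure H.
           \<bar>theta_word \<theta> \<omega> x - theta_word \<theta> \<omega> y\<bar> \<le> \<kappa> * \<bar>x - y\<bar>" using contr by blast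
  obtain gv where v: "continuous_on (closure H) v" "continuous_on (closure H) gv"
      "\<forall>x\<in>H. (v has_real_derivative gv x) (at x)"
    using Cm_extract[OF v_Cm m open_H] by blast
  have "\<forall>\<beta>\<in>B. \<exists>g. continuous_on (closure H) (b \<beta>) \<and> continuous_on (closure H) g \<and> (\<forall>x\<in>H. (b \<beta> has_real_derivative g x) (at x))"
    using Cm_extract[OF _ m open_H] b_Cm by blast
  then obtain bD where bD: "\<forall>\<beta>\<in>B. continuous_on (closure H) (b \<beta>) \<and> continuous_on (closure H) (bD \<beta>) \<and> (\<forall>x\<in>H. (b \<beta> has_real_derivative bD \<beta> x) (at x))"
    by (rule bchoice[elim_format]) blast
  have "\<forall>\<beta>\<in>B. \<exists>g. continuous_on (closure H) (\<theta> \<beta>) \<and> continuous_on (closure H) g \<and> (\<forall>x\<in>H. (\<theta> \<beta> has_real_derivative g x) (at x))"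
    using Cm_extract[OF _ m open_H] \<theta>_Cm by blast
  then obtain tD where tD: "\<forall>\<beta>\<in>B. continuous_on (closure H) (\<theta> \<beta>) \<and> continuous_on (closure H) (tD \<beta>) \<and> (\<forall>x\<in>H. (\<theta> \<beta> has_real_derivative tD \<beta> x) (at x))"
    by (rule bchoice[elim_format]) blast
  interpret M: Main n c d H B b \<theta> s r v gv bD tD \<epsilon> C1 \<mu> \<kappa>
  proof (unfold_locales)
    show "finite B" by fact
    show "\<forall>\<beta>\<in>B. \<theta> \<beta> ` H \<subseteq> H" by fact
    show "\<forall>\<beta>\<in>B. \<forall>x\<in>closure H. b \<beta> x > 0" by fact
    show "\<forall>\<beta>\<in>B. continuous_on (closure H) (b \<beta>)" using bD by blast
    show "\<forall>\<beta>\<in>B. continuous_on (closure H) (bD \<beta>)" using bD by blast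
    show "\<forall>\<beta>\<in>B. \<forall>x\<in>H. (b \<beta> has_real_derivative bD \<beta> x) (at x)" using bD by blast
    show "\<forall>\<beta>\<in>B. continuous_on (closure H) (\<theta> \<beta>)" using tD by blast
    show "\<forall>\<beta>\<in>B. continuous_on (closure H) (tD \<beta>)" using tD by blast
    show "\<forall>\<beta>\<in>B. \<forall>x\<in>H. (\<theta> \<beta> has_real_derivative tD \<beta> x) (at x)" using tD by blast
    show "continuous_on (closure H) v" "continuous_on (closure H) gv"
      "\<forall>x\<in>H. (v has_real_derivative gv x) (at x)" using v by auto
    show "\<forall>x\<in>closure H. v x > 0" by fact
    show "r > 0" by fact
    show "s > 0" by fact
    show "\<forall>x\<in>closure H. (\<Sum>\<beta>\<in>B. b \<beta> x powr s * v (\<theta> \<beta> x)) = r * v x" by fact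
    show "\<epsilon> 0 = 1" by fact
    show "\<forall>\<nu>\<ge>1. \<epsilon> \<nu> = Sup {\<bar>theta_word \<theta> \<omega> x - theta_word \<theta> \<omega> y\<bar> / \<bar>x - y\<bar> |
                   \<omega> x y. \<omega> \<in> words B \<nu> \<and> x \<in> H \<and> y \<in> H \<and> x \<noteq> y}" by fact
    show "C1 = Sup {\<bar>deriv (b \<beta>) x\<bar> / b \<beta> x | \<beta> x. \<beta> \<in> B \<and> x \<in> H}" by fact
    show "1 \<le> \<mu>" by fact
    show "\<kappa> < 1" by fact
    show "\<forall>\<omega>\<in>words B \<mu>. \<forall>x\<in>closure H. \<forall>y\<in>closure H.
           \<bar>theta_word \<theta> \<omega> x - theta_word \<theta> \<omega> y\<bar> \<le> \<kappa> * \<bar>x - y\<bar>" by fact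
    show "H \<noteq> {}" by fact
  qed
  show ?thesis using M.final1 M.final2 by blast
qed

end
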